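(* Let $n$ and $d$ be positive integers and let $\vec{G}$ be a digraph of order $n$ whose minimum outdegree is at least $d$. Then $\vec{G}$ contains a subdivision of the complete digraph of order $\lfloor d^2/(8n^{3/2}) \rfloor$.
   Context: Digraphs have no loops, and for any ordered pair of vertices $x,y$ there is at most one edge directed from $x$ to $y$ (there may also be an edge from $y$ to $x$). The complete digraph of order $\ell$ has $\ell$ vertices and, for every ordered pair $(v,w)$ of distinct vertices, an edge directed from $v$ to $w$. A digraph $\vec{H}$ is a subdivision of a digraph $\vec{F}$ if $\vec{H}$ can be obtained from $\vec{F}$ by replacing each edge $\vec{xy}$ of $\vec{F}$ by a directed path from $x$ to $y$, such that the paths corresponding to distinct edges are internally vertex-disjoint (and their interior vertices are new). "Contains a subdivision" means has a subdigraph that is a subdivision. *)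

theory Defs
  imports Main Complex_Main
begin

definition digraph :: "'a set \<Rightarrow> ('a \<times> 'a) set \<Rightarrow> bool" where
  "digraph V E \<longleftrightarrow> finite V \<and> E \<subseteq> V \<times> V \<and> (\<forall>x. (x, x) \<notin> E)"

definition out_degree :: "('a \<times> 'a) set \<Rightarrow> 'a \<Rightarrow> nat" where
  "out_degree E v = card {w. (v, w) \<in> E}"

definition dipath :: "('a \<times> 'a) set \<Rightarrow> 'a \<Rightarrow> 'a \<Rightarrow> 'a list \<Rightarrow> bool" where
  "dipath E x y p \<longleftrightarrow> length p \<ge> 2 \<and> hd p = x \<and> last p = y \<and> distinct p \<and>
     (\<forall>i. Suc i < length p \<longrightarrow> (p ! i, p ! Suc i) \<in> E)"

definition interior :: "'a list \<Rightarrow> 'a set" where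
  "interior p = set (butlast (tl p))"

definition contains_complete_subdivision :: "'a set \<Rightarrow> ('a \<times> 'a) set \<Rightarrow> nat \<Rightarrow> bool" where
  "contains_complete_subdivision V E l \<longleftrightarrow>
     (\<exists>B P. B \<subseteq> V \<and> card B = l \<and>
        (\<forall>x\<in>B. \<forall>y\<in>B. x \<noteq> y \<longrightarrow> dipath E x y (P (x, y)) \<and> set (P (x, y)) \<subseteq> V
                                     \<and> interior (P (x, y)) \<inter> B = {}) \<and>
        (\<forall>x\<in>B. \<forall>y\<in>B. \<forall>x'\<in>B. \<forall>y'\<in>B. x \<noteq> y \<longrightarrow> x' \<noteq> y' \<longrightarrow> (x, y) \<noteq> (x', y') \<longrightarrow>
            interior (P (x, y)) \<inter> interior (P (x', y')) = {}))"

end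

theory Submission
  imports Defs
begin

definition odeg :: "('a \<times> 'a) set \<Rightarrow> 'a set \<Rightarrow> 'a \<Rightarrow> nat" where
  "odeg E T v = card {w\<in>T. (v, w) \<in> E}"

definition ideg :: "('a \<times> 'a) set \<Rightarrow> 'a set \<Rightarrow> 'a \<Rightarrow> nat" where
  "ideg E T v = card {w\<in>T. (w, v) \<in> E}"

definition good :: "'a set \<Rightarrow> ('a \<times> 'a) set \<Rightarrow> real \<Rightarrow> real \<Rightarrow> 'a set \<Rightarrow> bool" where
  "good V E dd cc T \<longleftrightarrow> T \<subseteq> V \<and> T \<noteq> {} \<and>
     (\<forall>v\<in>T. real (odeg E T v) \<ge> dd - cc * (real (card V) - real (card T)))"

lemma sum_ideg_odeg:
  assumes "finite T"
  shows "(\<Sum>v\<in>T. ideg E T v) = (\<Sum>v\<in>T. odeg E T v)"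
proof -
  have "(\<Sum>v\<in>T. odeg E T v) = card (Sigma T (\<lambda>v. {w\<in>T. (v, w) \<in> E}))"
    using assms by (simp add: odeg_def card_SigmaI)
  also have "Sigma T (\<lambda>v. {w\<in>T. (v, w) \<in> E}) = prod.swap ` Sigma T (\<lambda>v. {w\<in>T. (w, v) \<in> E})"
    by (auto simp: image_iff)
  also have "card \<dots> = card (Sigma T (\<lambda>v. {w\<in>T. (w, v) \<in> E}))"
    by (rule card_image) (simp add: inj_on_def)
  also have "\<dots> = (\<Sum>v\<in>T. ideg E T v)"
    using assms by (simp add: ideg_def card_SigmaI)
  finally show ?thesis by simp
qed

lemma interior_eq:
  assumes "distinct p" "length p \<ge> 2"
  shows "interior p = set p - {hd p, last p}"
proof -
  obtain a q where p: "p = a # q" using assms by (cases p) auto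
  have "q \<noteq> []" using assms p by auto
  then obtain r b where q: "q = r @ [b]" by (cases q rule: rev_exhaust) auto
  show ?thesis using assms unfolding p q interior_def by auto
qed

lemma pow_bound:
  fixes c :: real
  assumes "0 < c" "c \<le> 1" "0 < k"
  shows "(1 - c) ^ k \<le> 2 / (c * real k) ^ 2"
proof -
  have bin: "(1 + c) ^ m \<ge> 1 + real m * c + real m * (real m - 1) / 2 * c ^ 2" for m
  proof (induction m)
    case 0 then show ?case by simp
  next
    case (Suc m)
    have "(1 + c) ^ Suc m = (1 + c) * (1 + c) ^ m" by simp
    also have "\<dots> \<ge> (1 + c) * (1 + real m * c + real m * (real m - 1) / 2 * c ^ 2)"
      using Suc assms by (intro mult_left_mono) auto
    finally have h: "(1 + c) ^ Suc m \<ge> (1 + c) * (1 + real m * c + real m * (real m - 1) / 2 * c ^ 2)" .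
    have "(1 + c) * (1 + real m * c + real m * (real m - 1) / 2 * c ^ 2) - 
          (1 + real (Suc m) * c + real (Suc m) * (real (Suc m) - 1) / 2 * c ^ 2)
          = real m * (real m - 1) / 2 * c ^ 3"
      unfolding of_nat_Suc power2_eq_square power3_eq_cube by (simp add: field_simps)
    moreover have "real m * (real m - 1) / 2 * c ^ 3 \<ge> 0"
    proof (cases m)
      case 0 then show ?thesis by simp
    next
      case (Suc j) then show ?thesis using assms by simp
    qed
    ultimately show ?case using h by linarith
  qed
  have pos: "(1 + c) ^ k > 0" using assms by simp
  have "(1 - c) ^ k * (1 + c) ^ k = (1 - c ^ 2) ^ k"
    by (simp add: power_mult_distrib[symmetric] algebra_simps power2_eq_square)
  also have "\<dots> \<le> 1" using assms
    by (intro power_le_one) (auto simp: power2_eq_square mult_le_one)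
  finally have A: "(1 - c) ^ k \<le> 1 / (1 + c) ^ k" using pos by (simp add: field_simps)
  have "1 + real k * c + real k * (real k - 1) / 2 * c ^ 2 \<ge> (c * real k) ^ 2 / 2"
  proof -
    have h1: "real k * c * c \<le> real k * c * 1" using assms by (intro mult_left_mono) auto
    have h2: "real k * (real k - 1) / 2 * c ^ 2 = (c * real k) ^ 2 / 2 - real k * c * c / 2"
      by (simp add: field_simps power2_eq_square)
    have "real k * c \<ge> 0" using assms by simp
    then show ?thesis using h1 h2 by linarith
  qed
  with bin[of k] have B: "(1 + c) ^ k \<ge> (c * real k) ^ 2 / 2" by linarith
  have C: "(c * real k) ^ 2 / 2 > 0" using assms by simp
  have "1 / (1 + c) ^ k \<le> 1 / ((c * real k) ^ 2 / 2)"
    using B C pos by (intro divide_left_mono mult_pos_pos) auto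
  with A show ?thesis by simp
qed


fun reach :: "('a \<times> 'a) set \<Rightarrow> 'a set \<Rightarrow> 'a \<Rightarrow> nat \<Rightarrow> 'a set" where
  "reach E W x 0 = {x}"
| "reach E W x (Suc k) = reach E W x k \<union> {v\<in>W. \<exists>z\<in>reach E W x k. (z, v) \<in> E}"

lemma reach_sub: "x \<in> W \<Longrightarrow> reach E W x k \<subseteq> W"
  by (induction k) auto

lemma reach_mono: "reach E W x k \<subseteq> reach E W x (Suc k)"
  by auto

lemma reach_path:
  assumes "v \<in> reach E W x k"
  shows "\<exists>p. p \<noteq> [] \<and> hd p = x \<and> last p = v \<and> distinct p \<and> set p \<subseteq> reach E W x k \<and>
             length p \<le> Suc k \<and> (\<forall>i. Suc i < length p \<longrightarrow> (p ! i, p ! Suc i) \<in> E)"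
  using assms
proof (induction k arbitrary: v)
  case 0
  then show ?case by (intro exI[of _ "[x]"]) auto
next
  case (Suc k)
  show ?case
  proof (cases "v \<in> reach E W x k")
    case True
    from Suc.IH[OF True] obtain p where p: "p \<noteq> [] \<and> hd p = x \<and> last p = v \<and> distinct p \<and> set p \<subseteq> reach E W x k \<and>
             length p \<le> Suc k \<and> (\<forall>i. Suc i < length p \<longrightarrow> (p ! i, p ! Suc i) \<in> E)" by blast
    then show ?thesis using reach_mono[of E W x k] by (intro exI[of _ p]) auto
  next
    case False
    with Suc.prems obtain z where z: "z \<in> reach E W x k" "(z, v) \<in> E" by auto
    from Suc.IH[OF z(1)] obtain p where p: "p \<noteq> []" "hd p = x" "last p = z" "distinct p"
      "set p \<subseteq> reach E W x k" "length p \<le> Suc k" "\<forall>i. Suc i < length p \<longrightarrow> (p ! i, p ! Suc i) \<in> E" by blast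
    have "v \<notin> set p" using False p(5) by auto
    moreover have "\<forall>i. Suc i < length (p @ [v]) \<longrightarrow> ((p @ [v]) ! i, (p @ [v]) ! Suc i) \<in> E"
    proof (intro allI impI)
      fix i assume i: "Suc i < length (p @ [v])"
      show "((p @ [v]) ! i, (p @ [v]) ! Suc i) \<in> E"
      proof (cases "Suc i < length p")
        case True then show ?thesis using p(7) by (simp add: nth_append)
      next
        case False
        then have "Suc i = length p" using i by simp
        then have ii: "i = length p - 1" by simp
        then have "(p @ [v]) ! i = last p" "(p @ [v]) ! Suc i = v"
          using p(1) \<open>Suc i = length p\<close> by (auto simp: nth_append last_conv_nth)
        then show ?thesis using z p(3) by simp
      qed
    qed
    ultimately show ?thesis using p Suc.prems reach_mono[of E W x k]
      by (intro exI[of _ "p @ [v]"]) auto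
  qed
qed

locale minset =
  fixes V :: "'a set" and E :: "('a \<times> 'a) set" and dd cc :: real and S :: "'a set"
  assumes finV: "finite V"
    and goodS: "good V E dd cc S"
    and minS: "\<And>T. good V E dd cc T \<Longrightarrow> card S \<le> card T"
begin

lemma SV: "S \<subseteq> V" using goodS by (simp add: good_def)
lemma finS: "finite S" using SV finV finite_subset by blast

lemma closed_large:
  assumes R: "R \<subseteq> S" "R \<noteq> {}" and U: "U \<subseteq> S" and X: "X \<subseteq> S"
    and cl: "\<forall>v\<in>R. \<forall>w\<in>S. (v, w) \<in> E \<longrightarrow> w \<in> R \<union> U \<union> X"
  shows "cc * (real (card S) - real (card R)) \<le> real (card U) + real (card X)"
proof (cases "R = S")
  case True then show ?thesis by simp
next
  case False
  have finR: "finite R" using R finS finite_subset by blast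
  have "card R < card S" using False R finS by (simp add: psubset_card_mono)
  then have "\<not> good V E dd cc R" using minS by (meson not_le)
  moreover have "R \<subseteq> V" using R SV by auto
  ultimately obtain v where v: "v \<in> R" "real (odeg E R v) < dd - cc * (real (card V) - real (card R))"
    using R unfolding good_def by (meson not_le)
  have "{w\<in>S. (v, w) \<in> E} \<subseteq> {w\<in>R. (v, w) \<in> E} \<union> U \<union> X" using cl v(1) by auto
  then have "card {w\<in>S. (v, w) \<in> E} \<le> card ({w\<in>R. (v, w) \<in> E} \<union> U \<union> X)"
    using finS U X finR by (intro card_mono) (auto intro: finite_subset)
  also have "\<dots> \<le> card {w\<in>R. (v, w) \<in> E} + card U + card X"
    by (meson card_Un_le add_le_mono le_trans order_refl)
  finally have A: "odeg E S v \<le> odeg E R v + card U + card X" by (simp add: odeg_def)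
  have B: "real (odeg E S v) \<ge> dd - cc * (real (card V) - real (card S))"
    using goodS v(1) R unfolding good_def by auto
  from A have "real (odeg E S v) \<le> real (odeg E R v) + real (card U) + real (card X)" by linarith
  with B v(2) show ?thesis by (simp add: algebra_simps)
qed


lemma x_reach: "x \<in> reach E W x k"
  by (induction k) auto

lemma reach_step:
  assumes U: "U \<subseteq> S" and x: "x \<in> S - U" and c: "0 < cc"
  shows "real (card S) - real (card (reach E (S - U) x (Suc k)))
         \<le> (1 - cc) * (real (card S) - real (card (reach E (S - U) x k))) + real (card U)"
proof -
  let ?R = "reach E (S - U) x k" and ?R1 = "reach E (S - U) x (Suc k)"
  have RS: "?R \<subseteq> S" using reach_sub[of x "S - U" E k] x by auto
  have R1S: "?R1 \<subseteq> S" using reach_sub[of x "S - U" E "Suc k"] x by auto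
  have fin: "finite ?R" "finite ?R1" using RS R1S finS finite_subset by blast+
  have cl: "\<forall>v\<in>?R. \<forall>w\<in>S. (v, w) \<in> E \<longrightarrow> w \<in> ?R \<union> U \<union> (?R1 - ?R)"
    by auto
  have "cc * (real (card S) - real (card ?R)) \<le> real (card U) + real (card (?R1 - ?R))"
    using closed_large[OF RS _ U _ cl] x_reach[where x=x and W="S - U" and k=k] R1S by blast
  moreover have "card (?R1 - ?R) = card ?R1 - card ?R"
    using fin reach_mono[of E "S - U" x k] by (simp add: card_Diff_subset)
  moreover have "card ?R \<le> card ?R1"
    using fin reach_mono[of E "S - U" x k] by (simp add: card_mono)
  ultimately show ?thesis by (simp add: algebra_simps of_nat_diff)
qed

lemma reach_bound:
  assumes U: "U \<subseteq> S" and x: "x \<in> S - U" and c: "0 < cc" "cc \<le> 1"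
  shows "real (card S) - real (card (reach E (S - U) x k)) \<le> (1 - cc) ^ k * real (card S) + real (card U) / cc"
proof (induction k)
  case 0
  have "real (card U) / cc \<ge> 0" using c by simp
  moreover have "card {x} = 1" by simp
  ultimately show ?case using x finS by simp
next
  case (Suc k)
  have "real (card S) - real (card (reach E (S - U) x (Suc k)))
         \<le> (1 - cc) * (real (card S) - real (card (reach E (S - U) x k))) + real (card U)"
    by (rule reach_step[OF U x c(1)])
  also have "\<dots> \<le> (1 - cc) * ((1 - cc) ^ k * real (card S) + real (card U) / cc) + real (card U)"
    using Suc c by (intro add_right_mono mult_left_mono) auto
  also have "\<dots> = (1 - cc) ^ Suc k * real (card S) + real (card U) / cc"
    using c by (simp add: field_simps)
  finally show ?case .
qed

lemma path_exists:
  assumes U: "U \<subseteq> S" and x: "x \<in> S - U" and y: "y \<in> S - U" and xy: "x \<noteq> y"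
    and c: "0 < cc" "cc \<le> 1"
    and big: "real (ideg E S y) > (1 - cc) ^ k * real (card S) + real (card U) / cc"
  shows "\<exists>p. dipath E x y p \<and> set p \<subseteq> S - U \<and> length p \<le> k + 2"
proof -
  let ?R = "reach E (S - U) x k"
  have RS: "?R \<subseteq> S" using reach_sub[of x "S - U" E k] x by auto
  have finR: "finite ?R" using RS finS finite_subset by blast
  have "\<exists>z\<in>?R. (z, y) \<in> E"
  proof (rule ccontr)
    assume "\<not> ?thesis"
    then have "{z\<in>S. (z, y) \<in> E} \<subseteq> S - ?R" by auto
    then have "card {z\<in>S. (z, y) \<in> E} \<le> card (S - ?R)" using finS by (intro card_mono) auto
    also have "\<dots> = card S - card ?R" using RS finR by (simp add: card_Diff_subset)
    finally have "real (ideg E S y) \<le> real (card S) - real (card ?R)"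
      unfolding ideg_def using card_mono[OF finS RS] by linarith
    with reach_bound[OF U x c, of k] big show False by linarith
  qed
  then have "y \<in> reach E (S - U) x (Suc k)" using y by auto
  from reach_path[OF this] obtain p where p: "p \<noteq> []" "hd p = x" "last p = y" "distinct p"
    "set p \<subseteq> reach E (S - U) x (Suc k)" "length p \<le> Suc (Suc k)"
    "\<forall>i. Suc i < length p \<longrightarrow> (p ! i, p ! Suc i) \<in> E" by blast
  have "length p \<ge> 2"
  proof (rule ccontr)
    assume "\<not> length p \<ge> 2"
    moreover have "length p \<noteq> 0" using p(1) by simp
    ultimately have "length p = 1" by linarith
    then obtain a where "p = [a]" by (metis One_nat_def length_0_conv length_Suc_conv)
    then show False using p xy by simp
  qed
  moreover have "set p \<subseteq> S - U" using p(5) reach_sub[of x "S - U" E "Suc k"] x by auto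
  ultimately show ?thesis using p unfolding dipath_def by (intro exI[of _ p]) auto
qed


definition Inv :: "'a set \<Rightarrow> nat \<Rightarrow> ('a \<times> 'a) set \<Rightarrow> ('a \<times> 'a \<Rightarrow> 'a list) \<Rightarrow> bool" where
  "Inv B k Q P \<longleftrightarrow> (\<forall>q\<in>Q. dipath E (fst q) (snd q) (P q) \<and> set (P q) \<subseteq> S \<and>
        interior (P q) \<inter> B = {} \<and> card (interior (P q)) \<le> k) \<and>
     (\<forall>q\<in>Q. \<forall>q'\<in>Q. q \<noteq> q' \<longrightarrow> interior (P q) \<inter> interior (P q') = {})"

lemma interior_sub: "interior p \<subseteq> set p"
  unfolding interior_def by (cases p) (auto dest: in_set_butlastD)

lemma greedy:
  assumes c: "0 < cc" "cc \<le> 1" and B: "B \<subseteq> S" "card B = l"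
    and hi: "\<forall>y\<in>B. real (ideg E S y) \<ge> \<theta>"
    and key: "(1 - cc) ^ k * real (card S) + (real l + real k * real l * real l) / cc < \<theta>"
    and Q: "finite Q" "Q \<subseteq> {q. fst q \<in> B \<and> snd q \<in> B \<and> fst q \<noteq> snd q}"
  shows "\<exists>P. Inv B k Q P"
  using Q
proof (induction Q rule: finite_induct)
  case empty
  show ?case by (simp add: Inv_def)
next
  case (insert q Q)
  obtain P where P: "Inv B k Q P" using insert by auto
  obtain x y where q: "q = (x, y)" by (cases q)
  have xy: "x \<in> B" "y \<in> B" "x \<noteq> y" using insert.prems q by auto
  have finB: "finite B" using B finS finite_subset by blast
  define I where "I = (\<Union>q'\<in>Q. interior (P q'))"
  define U where "U = (B \<union> I) - {x, y}"
  have IS: "I \<subseteq> S" using P interior_sub unfolding I_def Inv_def by fastforce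
  have US: "U \<subseteq> S" using IS B unfolding U_def by auto
  have "card I \<le> (\<Sum>q'\<in>Q. card (interior (P q')))" unfolding I_def using insert(1) by (rule card_UN_le)
  also have "\<dots> \<le> (\<Sum>q'\<in>Q. k)" using P unfolding Inv_def by (intro sum_mono) auto
  also have "\<dots> = k * card Q" by simp
  finally have cI: "card I \<le> k * card Q" .
  have "Q \<subseteq> B \<times> B" using insert.prems by auto
  then have "card Q \<le> card (B \<times> B)" using finB by (intro card_mono) auto
  then have "card Q \<le> l * l" using B by (simp add: card_cartesian_product)
  then have "k * card Q \<le> k * (l * l)" by simp
  with cI have cI2: "card I \<le> k * (l * l)" by linarith
  have finI: "finite I" using IS finS finite_subset by blast
  have "card U \<le> card (B \<union> I)" unfolding U_def using finB finI by (intro card_mono) auto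
  also have "\<dots> \<le> card B + card I" by (rule card_Un_le)
  finally have "card U \<le> l + k * (l * l)" using cI2 B by linarith
  then have "real (card U) \<le> real l + real k * real l * real l"
    by (metis of_nat_add of_nat_le_iff of_nat_mult mult.assoc)
  then have "real (card U) / cc \<le> (real l + real k * real l * real l) / cc"
    using c by (simp add: divide_right_mono)
  then have big: "real (ideg E S y) > (1 - cc) ^ k * real (card S) + real (card U) / cc"
    using key hi xy by fastforce
  obtain p where p: "dipath E x y p" "set p \<subseteq> S - U" "length p \<le> k + 2"
    using path_exists[OF US _ _ xy(3) c big] xy B unfolding U_def by blast
  have ip: "interior p = set p - {x, y}"
    using p(1) interior_eq unfolding dipath_def by auto
  have ipB: "interior p \<inter> B = {}" using ip p(2) unfolding U_def by auto
  have ipI: "interior p \<inter> I = {}" using ip p(2) unfolding U_def by auto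
  have "card (interior p) \<le> length (butlast (tl p))" unfolding interior_def by (rule card_length)
  also have "\<dots> \<le> k" using p(3) by simp
  finally have cip: "card (interior p) \<le> k" .
  define P' where "P' = P(q := p)"
  have A1: "\<forall>r\<in>insert q Q. dipath E (fst r) (snd r) (P' r) \<and> set (P' r) \<subseteq> S \<and> interior (P' r) \<inter> B = {} \<and> card (interior (P' r)) \<le> k"
  proof
    fix r assume r: "r \<in> insert q Q"
    show "dipath E (fst r) (snd r) (P' r) \<and> set (P' r) \<subseteq> S \<and> interior (P' r) \<inter> B = {} \<and> card (interior (P' r)) \<le> k"
    proof (cases "r = q")
      case True then show ?thesis using p ipB cip q unfolding P'_def by auto
    next
      case False then show ?thesis using r P unfolding P'_def Inv_def by auto
    qed
  qed
  have A2: "\<forall>r\<in>insert q Q. \<forall>r'\<in>insert q Q. r \<noteq> r' \<longrightarrow> interior (P' r) \<inter> interior (P' r') = {}"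
  proof (intro ballI impI)
    fix r r' assume r: "r \<in> insert q Q" and r': "r' \<in> insert q Q" and ne: "r \<noteq> r'"
    show "interior (P' r) \<inter> interior (P' r') = {}"
    proof (cases "r = q")
      case True
      then have "r' \<in> Q" "r' \<noteq> q" using r' ne by auto
      then show ?thesis using True ipI unfolding P'_def I_def by auto
    next
      case False
      note F = this
      show ?thesis
      proof (cases "r' = q")
        case True
        then show ?thesis using F r ipI unfolding P'_def I_def by auto
      next
        case False
        then show ?thesis using F r r' ne P unfolding P'_def Inv_def by auto
      qed
    qed
  qed
  have "Inv B k (insert q Q) P'" unfolding Inv_def using A1 A2 by blast
  then show ?case by blast
qed


lemma main_in_S:
  assumes c: "0 < cc" "cc \<le> 1" and th: "\<theta> \<ge> 0" "real l + \<theta> \<le> dd - cc * real (card V)"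
    and key: "(1 - cc) ^ k * real (card S) + (real l + real k * real l * real l) / cc < \<theta>"
  shows "contains_complete_subdivision V E l"
proof -
  define H where "H = {v\<in>S. real (ideg E S v) \<ge> \<theta>}"
  have HS: "H \<subseteq> S" unfolding H_def by auto
  have finH: "finite H" using HS finS finite_subset by blast
  have sne: "S \<noteq> {}" using goodS by (simp add: good_def)
  then have spos: "real (card S) > 0" using finS by (simp add: card_gt_0_iff)
  have sV: "card S \<le> card V" using SV finV by (simp add: card_mono)
  have "(\<Sum>v\<in>S. real (odeg E S v)) \<ge> (\<Sum>v\<in>S. dd - cc * real (card V))"
  proof (intro sum_mono)
    fix v assume "v \<in> S"
    then have "real (odeg E S v) \<ge> dd - cc * (real (card V) - real (card S))"
      using goodS by (simp add: good_def)
    moreover have "cc * (real (card V) - real (card S)) \<le> cc * real (card V)" using c by simp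
    ultimately show "dd - cc * real (card V) \<le> real (odeg E S v)" by linarith
  qed
  moreover have "(\<Sum>v\<in>S. real (odeg E S v)) = (\<Sum>v\<in>S. real (ideg E S v))"
  proof -
    have "(\<Sum>v\<in>S. real (odeg E S v)) = real (\<Sum>v\<in>S. odeg E S v)" by (rule of_nat_sum[symmetric])
    also have "\<dots> = real (\<Sum>v\<in>S. ideg E S v)" using sum_ideg_odeg[OF finS, of E] by (rule arg_cong[symmetric])
    also have "\<dots> = (\<Sum>v\<in>S. real (ideg E S v))" by (rule of_nat_sum)
    finally show ?thesis .
  qed
  moreover have "(\<Sum>v\<in>S. dd - cc * real (card V)) = real (card S) * (dd - cc * real (card V))"
    by (rule sum_constant)
  ultimately have L: "real (card S) * (dd - cc * real (card V)) \<le> (\<Sum>v\<in>S. real (ideg E S v))"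
    by linarith
  have E1: "(\<Sum>v\<in>S. real (ideg E S v)) = (\<Sum>v\<in>H. real (ideg E S v)) + (\<Sum>v\<in>S - H. real (ideg E S v))"
    using sum.subset_diff[OF HS finS, of "\<lambda>v. real (ideg E S v)"] by linarith
  have E2: "(\<Sum>v\<in>H. real (ideg E S v)) \<le> (\<Sum>v\<in>H. real (card S))"
  proof (intro sum_mono)
    fix v assume "v \<in> H"
    show "real (ideg E S v) \<le> real (card S)" unfolding ideg_def using finS by (simp add: card_mono)
  qed
  have E3: "(\<Sum>v\<in>H. real (card S)) = real (card H) * real (card S)" by simp
  have E4: "(\<Sum>v\<in>S - H. real (ideg E S v)) \<le> (\<Sum>v\<in>S - H. \<theta>)"
    by (intro sum_mono) (auto simp: H_def)
  have E5: "(\<Sum>v\<in>S - H. \<theta>) = real (card (S - H)) * \<theta>" by simp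
  have "card (S - H) \<le> card S" using finS by (simp add: card_mono)
  then have E6: "real (card (S - H)) * \<theta> \<le> real (card S) * \<theta>"
    using th(1) by (intro mult_right_mono) auto
  have "real (card S) * (dd - cc * real (card V)) \<le> real (card H) * real (card S) + real (card S) * \<theta>"
    using L E1 E2 E3 E4 E5 E6 by linarith
  then have "real (card S) * (dd - cc * real (card V)) \<le> real (card S) * (real (card H) + \<theta>)"
    by (simp add: algebra_simps)
  then have "dd - cc * real (card V) \<le> real (card H) + \<theta>" using spos by simp
  then have "real l \<le> real (card H)" using th by linarith
  then have "l \<le> card H" by simp
  then obtain B where B: "B \<subseteq> H" "card B = l" "finite B" using obtain_subset_with_card_n by metis
  have BS: "B \<subseteq> S" using B HS by auto
  have hi: "\<forall>y\<in>B. real (ideg E S y) \<ge> \<theta>" using B unfolding H_def by auto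
  define Q where "Q = {q. fst q \<in> B \<and> snd q \<in> B \<and> fst q \<noteq> snd q}"
  have "Q \<subseteq> B \<times> B" unfolding Q_def by auto
  then have finQ: "finite Q" using B(3) finite_subset by blast
  obtain P where P: "Inv B k Q P" using greedy[OF c BS B(2) hi key finQ] unfolding Q_def by blast
  show ?thesis unfolding contains_complete_subdivision_def
  proof (intro exI[of _ B] exI[of _ "\<lambda>q. P q"] conjI)
    show "B \<subseteq> V" using BS SV by auto
    show "card B = l" by (rule B(2))
    show "\<forall>x\<in>B. \<forall>y\<in>B. x \<noteq> y \<longrightarrow> dipath E x y (P (x, y)) \<and> set (P (x, y)) \<subseteq> V \<and> interior (P (x, y)) \<inter> B = {}"
    proof (intro ballI impI)
      fix x y assume xy: "x \<in> B" "y \<in> B" "x \<noteq> y"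
      then have "(x, y) \<in> Q" unfolding Q_def by simp
      then have "dipath E x y (P (x, y)) \<and> set (P (x, y)) \<subseteq> S \<and> interior (P (x, y)) \<inter> B = {}"
        using P unfolding Inv_def by (metis fst_conv snd_conv)
      then show "dipath E x y (P (x, y)) \<and> set (P (x, y)) \<subseteq> V \<and> interior (P (x, y)) \<inter> B = {}"
        using SV by blast
    qed
    show "\<forall>x\<in>B. \<forall>y\<in>B. \<forall>x'\<in>B. \<forall>y'\<in>B. x \<noteq> y \<longrightarrow> x' \<noteq> y' \<longrightarrow> (x, y) \<noteq> (x', y') \<longrightarrow>
            interior (P (x, y)) \<inter> interior (P (x', y')) = {}"
    proof (intro ballI impI)
      fix x y x' y' assume xy: "x \<in> B" "y \<in> B" "x' \<in> B" "y' \<in> B" "x \<noteq> y" "x' \<noteq> y'" "(x, y) \<noteq> (x', y')"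
      then have "(x, y) \<in> Q" "(x', y') \<in> Q" unfolding Q_def by simp_all
      then show "interior (P (x, y)) \<inter> interior (P (x', y')) = {}"
        using P xy(7) unfolding Inv_def by blast
    qed
  qed
qed

end

lemma final_ineq:
  fixes a b d n l k :: real
  assumes a: "a > 0" and n: "n = a ^ 4" and b: "b > 0" and bl: "b ^ 2 = 2 * l" and l: "l \<ge> 2"
    and ld: "8 * l * a ^ 6 \<le> d ^ 2" and dn: "d < n" and d0: "d \<ge> 0"
    and k1: "k \<ge> 4 * a ^ 2 / (5 * l)" and k2: "k \<le> 4 * a ^ 2 / (5 * l) + 1"
  shows "b / a \<le> 1" and "2 * n / ((b / a) * k) ^ 2 + (l + k * l * l) / (b / a) + l + (b / a) * n < d"
proof -
  have a6: "a ^ 6 > 0" using a by simp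
  have "d ^ 2 < n ^ 2" using dn d0 by (simp add: power_strict_mono)
  moreover have "n ^ 2 = a ^ 6 * a ^ 2" using n by (simp add: power_mult[symmetric] power_add[symmetric])
  ultimately have "a ^ 6 * (8 * l) < a ^ 6 * a ^ 2" using ld by (simp add: mult.commute)
  then have la: "8 * l < a ^ 2" using a6 by (metis mult_less_cancel_left_pos)
  then have a16: "a ^ 2 > 16" using l by linarith
  have "b ^ 2 < (a / 2) ^ 2" using la bl by (simp add: power_divide)
  then have ba: "b < a / 2" using a b by (meson abs_of_pos less_imp_le power_less_imp_less_base zero_le_divide_iff zero_le_numeral)
  then show "b / a \<le> 1" using a by (simp add: divide_le_eq)
  have "(2 * b * a ^ 3) ^ 2 = 4 * b ^ 2 * a ^ 6" by (simp add: power_mult_distrib power_mult[symmetric])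
  also have "\<dots> \<le> d ^ 2" using bl ld by simp
  finally have d2: "2 * b * a ^ 3 \<le> d" using d0 by (meson power2_le_imp_le)
  have lpos: "l > 0" using l by simp
  have Y: "(b / a) * k \<ge> 8 * a / (5 * b)"
  proof -
    have "(b / a) * k \<ge> (b / a) * (4 * a ^ 2 / (5 * l))" using k1 a b by (intro mult_left_mono) auto
    also have "(b / a) * (4 * a ^ 2 / (5 * l)) = 8 * a / (5 * b)"
      using a b bl l by (simp add: field_simps power2_eq_square)
    finally show ?thesis .
  qed
  have Ypos: "8 * a / (5 * b) > 0" using a b by simp
  have "2 * n / ((b / a) * k) ^ 2 \<le> 2 * n / (8 * a / (5 * b)) ^ 2"
    using Y Ypos n a by (intro divide_left_mono power_mono mult_pos_pos) auto
  also have "\<dots> = 25 * a ^ 2 * b * b / 32" using a b n by (simp add: field_simps power2_eq_square power4_eq_xxxx)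
  also have "\<dots> \<le> 25 * a ^ 2 * b * (a / 2) / 32" using ba a b by (intro divide_right_mono mult_left_mono) auto
  also have "\<dots> = 25 / 64 * (a ^ 3 * b)" by (simp add: power3_eq_cube power2_eq_square)
  finally have T1: "2 * n / ((b / a) * k) ^ 2 \<le> 25 / 64 * (a ^ 3 * b)" .
  have "k * l * l \<le> (4 * a ^ 2 / (5 * l) + 1) * l * l" using k2 lpos by (intro mult_right_mono) auto
  also have "\<dots> = 4 * a ^ 2 * l / 5 + l * l" using lpos by (simp add: field_simps)
  finally have kl: "k * l * l \<le> 4 * a ^ 2 * l / 5 + l * l" .
  have "(l + k * l * l) / (b / a) = (l + k * l * l) * a / b" using a b by simp
  also have "\<dots> \<le> (l + 4 * a ^ 2 * l / 5 + l * l) * a / b" using kl a b by (intro divide_right_mono mult_right_mono) auto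
  also have "\<dots> = a * b / 2 + a * b ^ 3 / 4 + 2 / 5 * (a ^ 3 * b)"
  proof -
    have lb: "l = b ^ 2 / 2" using bl by simp
    show ?thesis unfolding lb using b by (simp add: field_simps power2_eq_square power3_eq_cube)
  qed
  finally have T2a: "(l + k * l * l) / (b / a) \<le> a * b / 2 + a * b ^ 3 / 4 + 2 / 5 * (a ^ 3 * b)" .
  have "a * b ^ 3 / 4 = a * b * b ^ 2 / 4" by (simp add: power2_eq_square power3_eq_cube)
  also have "\<dots> \<le> a * b * (a ^ 2 / 4) / 4" using la bl a b by (intro divide_right_mono mult_left_mono) auto
  also have "\<dots> = (a ^ 3 * b) / 16" by (simp add: power2_eq_square power3_eq_cube)
  finally have t21: "a * b ^ 3 / 4 \<le> (a ^ 3 * b) / 16" .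
  have "a * b / 2 = a * b * 1 / 2" by simp
  also have "\<dots> \<le> a * b * (a ^ 2 / 16) / 2" using a16 a b by (intro divide_right_mono mult_left_mono) auto
  also have "\<dots> = (a ^ 3 * b) / 32" by (simp add: power2_eq_square power3_eq_cube)
  finally have t22: "a * b / 2 \<le> (a ^ 3 * b) / 32" .
  have "l = b * b / 2" using bl by (simp add: power2_eq_square)
  also have "\<dots> \<le> b * (a / 2) / 2" using ba b by (intro divide_right_mono mult_left_mono) auto
  also have "\<dots> = a * b / 4" by simp
  also have "\<dots> \<le> a * b * (a ^ 2 / 16) / 4" using a16 a b by (intro divide_right_mono mult_left_mono) auto
  also have "\<dots> = (a ^ 3 * b) / 64" by (simp add: power2_eq_square power3_eq_cube)
  finally have T3: "l \<le> (a ^ 3 * b) / 64" .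
  have T4: "(b / a) * n = a ^ 3 * b" using a n by (simp add: field_simps power3_eq_cube power4_eq_xxxx)
  have pos: "a ^ 3 * b > 0" using a b by simp
  have "2 * b * a ^ 3 = 2 * (a ^ 3 * b)" by simp
  show "2 * n / ((b / a) * k) ^ 2 + (l + k * l * l) / (b / a) + l + (b / a) * n < d"
    using T1 T2a t21 t22 T3 T4 pos d2 by (simp add: algebra_simps)
qed


theorem theorem2:
  fixes V :: "'a set" and E :: "('a \<times> 'a) set" and n d :: nat
  assumes "digraph V E"
    and "card V = n" and "n > 0" and "d > 0"
    and "\<forall>v\<in>V. out_degree E v \<ge> d"
  shows "contains_complete_subdivision V E
           (nat \<lfloor>real d ^ 2 / (8 * real n powr (3/2))\<rfloor>)"
proof -
  define l where "l = nat \<lfloor>real d ^ 2 / (8 * real n powr (3/2))\<rfloor>"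
  have finV: "finite V" and EV: "E \<subseteq> V \<times> V" and noloop: "\<forall>x. (x, x) \<notin> E"
    using assms(1) unfolding digraph_def by auto
  have Vne: "V \<noteq> {}" using assms(2,3) by auto
  then obtain v0 where v0: "v0 \<in> V" by auto
  have "{w. (v0, w) \<in> E} \<subseteq> V - {v0}" using EV noloop by auto
  then have "card {w. (v0, w) \<in> E} \<le> card (V - {v0})" using finV by (intro card_mono) auto
  also have "\<dots> = n - 1" using v0 finV assms(2) by simp
  finally have "d \<le> n - 1" using assms(5) v0 unfolding out_degree_def by fastforce
  then have dn: "real d < real n" using assms(3) by linarith
  show ?thesis
  proof (cases "l \<le> 1")
    case True
    have "l \<le> card V" using True assms(2,3) by linarith
    then obtain B where B: "B \<subseteq> V" "card B = l" "finite B" using obtain_subset_with_card_n by metis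
    have same: "\<And>x y. x \<in> B \<Longrightarrow> y \<in> B \<Longrightarrow> x = y"
      using B True card_le_Suc0_iff_eq[OF B(3)] by auto
    show ?thesis unfolding l_def[symmetric] contains_complete_subdivision_def
      by (rule exI[of _ B], rule exI[of _ "\<lambda>_. []"]) (use B same in auto)
  next
    case False
    then have l2: "real l \<ge> 2" by simp
    define a where "a = real n powr (1/4)"
    have npos: "real n > 0" using assms(3) by simp
    have apos: "a > 0" unfolding a_def using npos by simp
    have "a ^ 4 = a powr (real 4)" using apos by (rule powr_realpow[symmetric])
    also have "\<dots> = real n" unfolding a_def using npos by (simp add: powr_powr)
    finally have a4: "a ^ 4 = real n" .
    have "a ^ 6 = a powr (real 6)" using apos by (rule powr_realpow[symmetric])
    also have "\<dots> = real n powr (3/2)" unfolding a_def using npos by (simp add: powr_powr)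
    finally have a6: "a ^ 6 = real n powr (3/2)" .
    define X where "X = real d ^ 2 / (8 * real n powr (3/2))"
    have X0: "X \<ge> 0" unfolding X_def by simp
    have "real l = real_of_int \<lfloor>X\<rfloor>" unfolding l_def X_def[symmetric] using X0 by simp
    also have "\<dots> \<le> X" by simp
    finally have lX: "real l \<le> X" .
    have a6pos: "a ^ 6 > 0" using apos by simp
    have ld: "8 * real l * a ^ 6 \<le> real d ^ 2"
    proof -
      have "8 * real l * a ^ 6 \<le> 8 * X * a ^ 6" using lX a6pos by simp
      also have "\<dots> = real d ^ 2" unfolding X_def a6[symmetric] using a6pos by simp
      finally show ?thesis .
    qed
    define b where "b = sqrt (2 * real l)"
    have bpos: "b > 0" unfolding b_def using l2 by simp
    have bl: "b ^ 2 = 2 * real l" unfolding b_def using l2 by simp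
    define k where "k = nat \<lceil>4 * a ^ 2 / (5 * real l)\<rceil>"
    have kq: "4 * a ^ 2 / (5 * real l) > 0" using apos l2 by simp
    have k1: "real k \<ge> 4 * a ^ 2 / (5 * real l)" unfolding k_def using kq by linarith
    have k2: "real k \<le> 4 * a ^ 2 / (5 * real l) + 1"
    proof -
      have "real k = real_of_int \<lceil>4 * a ^ 2 / (5 * real l)\<rceil>" unfolding k_def using kq by simp
      moreover have "real_of_int \<lceil>4 * a ^ 2 / (5 * real l)\<rceil> - 1 < 4 * a ^ 2 / (5 * real l)"
        using ceiling_correct by blast
      ultimately show ?thesis by linarith
    qed
    have kpos: "0 < k" using k1 kq by linarith
    define cc where "cc = b / a"
    have cc1: "cc \<le> 1" and ineq: "2 * real n / (cc * real k) ^ 2 + (real l + real k * real l * real l) / cc + real l + cc * real n < real d"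
      using final_ineq[OF apos a4[symmetric] bpos bl l2 ld _ _ k1 k2] dn unfolding cc_def by auto
    have ccpos: "cc > 0" unfolding cc_def using apos bpos by simp
    have goodV: "good V E (real d) cc V"
    proof -
      have "\<forall>v\<in>V. real (odeg E V v) \<ge> real d"
      proof
        fix v assume v: "v \<in> V"
        have "{w\<in>V. (v, w) \<in> E} = {w. (v, w) \<in> E}" using EV by auto
        then show "real (odeg E V v) \<ge> real d" using assms(5) v unfolding odeg_def out_degree_def by simp
      qed
      then show ?thesis unfolding good_def using Vne by simp
    qed
    define m where "m = (LEAST m. \<exists>T. good V E (real d) cc T \<and> card T = m)"
    have "\<exists>T. good V E (real d) cc T \<and> card T = m"
      unfolding m_def by (rule LeastI_ex) (use goodV in blast)
    then obtain S where S: "good V E (real d) cc S" "card S = m" by blast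
    have minS: "\<And>T. good V E (real d) cc T \<Longrightarrow> card S \<le> card T"
      using S(2) unfolding m_def by (metis (mono_tags, lifting) Least_le)
    interpret minset V E "real d" cc S
      by unfold_locales (use finV S(1) minS in auto)
    have cS: "real (card S) \<le> real n" using SV finV assms(2) card_mono by (metis of_nat_le_iff)
    have pb: "(1 - cc) ^ k \<le> 2 / (cc * real k) ^ 2" by (rule pow_bound[OF ccpos cc1 kpos])
    have p0: "(1 - cc) ^ k \<ge> 0" using cc1 by simp
    have "(1 - cc) ^ k * real (card S) \<le> (1 - cc) ^ k * real n" using p0 cS by (intro mult_left_mono)
    also have "\<dots> \<le> 2 / (cc * real k) ^ 2 * real n" using pb npos by (intro mult_right_mono) auto
    also have "\<dots> = 2 * real n / (cc * real k) ^ 2" by simp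
    finally have t1: "(1 - cc) ^ k * real (card S) \<le> 2 * real n / (cc * real k) ^ 2" .
    have nonneg: "(1 - cc) ^ k * real (card S) + (real l + real k * real l * real l) / cc \<ge> 0"
      using p0 ccpos by simp
    show ?thesis unfolding l_def[symmetric]
    proof (rule main_in_S[OF ccpos cc1, where \<theta> = "real d - cc * real n - real l"])
      show "(1 - cc) ^ k * real (card S) + (real l + real k * real l * real l) / cc < real d - cc * real n - real l"
        using t1 ineq by linarith
      then show "0 \<le> real d - cc * real n - real l" using nonneg by linarith
      show "real l + (real d - cc * real n - real l) \<le> real d - cc * real (card V)" using assms(2) by simp
    qed
  qed
qed

end
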